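(* $V^{\otimes3}=[\omega_0,V]\oplus(V\otimes Q)$.
   Context: $\mathbb{K}$ is a field of characteristic zero and $V$ a symplectic $\mathbb{K}$-vector space of dimension $2g$ with symplectic basis $a_1,\ldots,a_g,b_1,\ldots,b_g$; $\omega_0=\sum_{i=1}^g(a_i\otimes b_i-b_i\otimes a_i)\in V^{\otimes2}$. $C\colon V^{\otimes2}\to\mathbb{K}$ is the pairing given by the symplectic form, $C(a_i\otimes b_j)=\delta_{ij}$, $C(b_i\otimes a_j)=-\delta_{ij}$, $C(a_i\otimes a_j)=C(b_i\otimes b_j)=0$, and $Q=\ker C$. $[\omega_0,V]=\{\omega_0 v-v\omega_0: v\in V\}\subset V^{\otimes3}$ (products in the tensor algebra). *)

theory Defs
  imports Main "HOL-Library.Function_Algebras"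
begin

text \<open>Coordinates: V = K^(2g) with basis vectors indexed by 0..2g-1;
 index i-1 is a_i and index g+i-1 is b_i (1 \<le> i \<le> g).
 Tensors in V^{\<otimes>k} are coefficient functions in the standard tensor basis,
 vanishing outside the index range.\<close>

definition Vsp :: "nat \<Rightarrow> (nat \<Rightarrow> 'a::field_char_0) set" where
  "Vsp g = {v. \<forall>i. 2*g \<le> i \<longrightarrow> v i = 0}"

definition V2 :: "nat \<Rightarrow> (nat \<Rightarrow> nat \<Rightarrow> 'a::field_char_0) set" where
  "V2 g = {t. \<forall>i j. (2*g \<le> i \<or> 2*g \<le> j) \<longrightarrow> t i j = 0}"

definition V3 :: "nat \<Rightarrow> (nat \<Rightarrow> nat \<Rightarrow> nat \<Rightarrow> 'a::field_char_0) set" where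
  "V3 g = {t. \<forall>i j k. (2*g \<le> i \<or> 2*g \<le> j \<or> 2*g \<le> k) \<longrightarrow> t i j k = 0}"

definition omega0 :: "nat \<Rightarrow> nat \<Rightarrow> nat \<Rightarrow> 'a::field_char_0" where
  "omega0 g i j = (if i < g \<and> j = g + i then 1
                   else if j < g \<and> i = g + j then -1 else 0)"

text \<open>The contraction C : V^{\<otimes>2} \<rightarrow> K given by the symplectic form:
  C(a_i\<otimes>b_j) = \<delta>_ij, C(b_i\<otimes>a_j) = -\<delta>_ij, C(a\<otimes>a) = C(b\<otimes>b) = 0, extended linearly.\<close>
definition Cpair :: "nat \<Rightarrow> (nat \<Rightarrow> nat \<Rightarrow> 'a::field_char_0) \<Rightarrow> 'a" where
  "Cpair g t = (\<Sum>i<g. t i (g + i) - t (g + i) i)"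

definition Qsp :: "nat \<Rightarrow> (nat \<Rightarrow> nat \<Rightarrow> 'a::field_char_0) set" where
  "Qsp g = {t \<in> V2 g. Cpair g t = 0}"

definition tprod21 :: "(nat \<Rightarrow> nat \<Rightarrow> 'a::field_char_0) \<Rightarrow> (nat \<Rightarrow> 'a) \<Rightarrow> nat \<Rightarrow> nat \<Rightarrow> nat \<Rightarrow> 'a" where
  "tprod21 w v = (\<lambda>i j k. w i j * v k)"

definition tprod12 :: "(nat \<Rightarrow> 'a::field_char_0) \<Rightarrow> (nat \<Rightarrow> nat \<Rightarrow> 'a) \<Rightarrow> nat \<Rightarrow> nat \<Rightarrow> nat \<Rightarrow> 'a" where
  "tprod12 v w = (\<lambda>i j k. v i * w j k)"

definition commOmegaV :: "nat \<Rightarrow> (nat \<Rightarrow> nat \<Rightarrow> nat \<Rightarrow> 'a::field_char_0) set" where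
  "commOmegaV g = {tprod21 (omega0 g) v - tprod12 v (omega0 g) | v. v \<in> Vsp g}"

definition VtensQ :: "nat \<Rightarrow> (nat \<Rightarrow> nat \<Rightarrow> nat \<Rightarrow> 'a::field_char_0) set" where
  "VtensQ g = {T. \<exists>n (vs :: nat \<Rightarrow> nat \<Rightarrow> 'a) qs.
      (\<forall>m<n. vs m \<in> Vsp g \<and> qs m \<in> Qsp g) \<and>
      T = (\<lambda>i j k. \<Sum>m<n. vs m i * qs m j k)}"

definition is_direct_sum :: "('b::ab_group_add) set \<Rightarrow> 'b set \<Rightarrow> 'b set \<Rightarrow> bool" where
  "is_direct_sum S A B \<longleftrightarrow> S = {x + y | x y. x \<in> A \<and> y \<in> B} \<and> A \<inter> B = {0}"

end

theory Submission
  imports Defs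
begin

definition contr :: "nat \<Rightarrow> (nat \<Rightarrow> nat \<Rightarrow> nat \<Rightarrow> 'a::field_char_0) \<Rightarrow> nat \<Rightarrow> 'a" where
  "contr g T i = Cpair g (T i)"

lemma contr_diff: "contr g (A - B) i = contr g A i - contr g B i"
  by (simp add: contr_def Cpair_def fun_diff_def sum_subtractf[symmetric] algebra_simps)

lemma sum_ind1: "(\<Sum>l<(g::nat). (if i = g + l then f l else 0)) = (if g \<le> i \<and> i < 2*g then f (i - g) else (0::'a::comm_monoid_add))"
proof -
  have "(\<Sum>l<g. (if i = g + l then f l else 0)) = (\<Sum>l<g. (if l = i - g \<and> g \<le> i then f l else 0))"
  proof (rule sum.cong)
    fix l assume "l \<in> {..<g}"
    have "(i = g + l) = (l = i - g \<and> g \<le> i)" by arith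
    then show "(if i = g + l then f l else 0) = (if l = i - g \<and> g \<le> i then f l else 0)" by simp
  qed simp
  also have "\<dots> = (if g \<le> i \<and> i < 2*g then f (i - g) else 0)"
  proof (cases "g \<le> i")
    case True
    then have "(i - g < g) = (i < 2*g)" by arith
    with True show ?thesis by (simp add: sum.delta)
  next
    case False
    then show ?thesis by simp
  qed
  finally show ?thesis .
qed

lemma sum_ind2: "(\<Sum>l<(g::nat). (if i = l then f l else 0)) = (if i < g then f i else (0::'a::comm_monoid_add))"
  by (subst sum.delta') auto

lemma contr_21: assumes "v \<in> Vsp g"
  shows "contr g (tprod21 (omega0 g) v) i = - (v i :: 'a::field_char_0)"
proof -
  have "contr g (tprod21 (omega0 g) v) i =
     (\<Sum>l<g. (if i = g + l then - v (g + l) else 0)) - (\<Sum>l<g. (if i = l then v l else 0))"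
    unfolding contr_def Cpair_def tprod21_def omega0_def sum_subtractf[symmetric]
    by (rule sum.cong) auto
  also have "\<dots> = - v i"
    unfolding sum_ind1 sum_ind2 using assms by (auto simp: Vsp_def)
  finally show ?thesis .
qed

lemma Cpair_omega: "Cpair g (omega0 g) = (of_nat (2*g) :: 'a::field_char_0)"
proof -
  have "Cpair g (omega0 g) = (\<Sum>l<g. (2::'a))"
    unfolding Cpair_def omega0_def by (rule sum.cong) auto
  then show ?thesis by simp
qed

lemma contr_12: "contr g (tprod12 v (omega0 g)) i = v i * (of_nat (2*g) :: 'a::field_char_0)"
proof -
  have "contr g (tprod12 v (omega0 g)) i = v i * Cpair g (omega0 g)"
    unfolding contr_def Cpair_def tprod12_def by (simp add: sum_distrib_left algebra_simps sum_subtractf)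
  then show ?thesis by (simp add: Cpair_omega)
qed

lemma contr_comm: assumes "v \<in> Vsp g"
  shows "contr g (tprod21 (omega0 g) v - tprod12 v (omega0 g)) i = - (of_nat (2*g+1)) * (v i :: 'a::field_char_0)"
  using assms by (simp add: contr_diff contr_21 contr_12 algebra_simps)

lemma contr_VQ: assumes "T \<in> VtensQ g" shows "contr g T i = (0::'a::field_char_0)"
proof -
  obtain n and vs :: "nat \<Rightarrow> nat \<Rightarrow> 'a" and qs :: "nat \<Rightarrow> nat \<Rightarrow> nat \<Rightarrow> 'a" where h: "\<forall>m<n. vs m \<in> Vsp g \<and> qs m \<in> Qsp g"
    and T: "T = (\<lambda>i j k. \<Sum>m<n. vs m i * qs m j k)"
    using assms unfolding VtensQ_def by blast
  have "contr g T i = (\<Sum>m<n. vs m i * Cpair g (qs m))"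
    unfolding T contr_def Cpair_def
    by (simp add: sum_subtractf[symmetric] sum_distrib_left algebra_simps sum.swap[of _ "{..<g}"])
  also have "\<dots> = 0" using h by (simp add: Qsp_def)
  finally show ?thesis .
qed

lemma comm_V3: assumes "v \<in> Vsp g"
  shows "tprod21 (omega0 g) v - tprod12 v (omega0 g) \<in> V3 g"
  using assms unfolding V3_def Vsp_def tprod21_def tprod12_def omega0_def fun_diff_def
  by auto

lemma VQ_V3: assumes "T \<in> VtensQ g" shows "T \<in> V3 g"
proof -
  obtain n and vs :: "nat \<Rightarrow> nat \<Rightarrow> 'a" and qs :: "nat \<Rightarrow> nat \<Rightarrow> nat \<Rightarrow> 'a" where h: "\<forall>m<n. vs m \<in> Vsp g \<and> qs m \<in> Qsp g"
    and T: "T = (\<lambda>i j k. \<Sum>m<n. vs m i * qs m j k)"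
    using assms unfolding VtensQ_def by blast
  show ?thesis unfolding V3_def T
  proof (intro CollectI allI impI)
    fix i j k assume a: "2 * g \<le> i \<or> 2 * g \<le> j \<or> 2 * g \<le> k"
    show "(\<Sum>m<n. vs m i * qs m j k) = 0"
      by (rule sum.neutral) (use h a in \<open>auto simp: Vsp_def Qsp_def V2_def\<close>)
  qed
qed

theorem lemma5p1:
  fixes g :: nat
  shows "is_direct_sum (V3 g :: (nat \<Rightarrow> nat \<Rightarrow> nat \<Rightarrow> 'a::field_char_0) set)
           (commOmegaV g) (VtensQ g)"
  unfolding is_direct_sum_def
proof (intro conjI)
  have nz: "(of_nat (2*g+1) :: 'a) \<noteq> 0" by (metis of_nat_eq_0_iff add_is_0 one_neq_zero)
  show "(V3 g :: (nat \<Rightarrow> nat \<Rightarrow> nat \<Rightarrow> 'a) set) = {x + y |x y. x \<in> commOmegaV g \<and> y \<in> VtensQ g}"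
  proof
    show "{x + y |x y. x \<in> commOmegaV g \<and> y \<in> VtensQ g} \<subseteq> (V3 g :: (nat \<Rightarrow> nat \<Rightarrow> nat \<Rightarrow> 'a) set)"
    proof safe
      fix x y :: "nat \<Rightarrow> nat \<Rightarrow> nat \<Rightarrow> 'a"
      assume "x \<in> commOmegaV g" "y \<in> VtensQ g"
      then have "x \<in> V3 g" "y \<in> V3 g" using comm_V3 VQ_V3 unfolding commOmegaV_def by auto
      then show "x + y \<in> V3 g" unfolding V3_def by auto
    qed
  next
    show "(V3 g :: (nat \<Rightarrow> nat \<Rightarrow> nat \<Rightarrow> 'a) set) \<subseteq> {x + y |x y. x \<in> commOmegaV g \<and> y \<in> VtensQ g}"
    proof
      fix T :: "nat \<Rightarrow> nat \<Rightarrow> nat \<Rightarrow> 'a" assume T: "T \<in> V3 g"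
      define v where "v = (\<lambda>i. - contr g T i / of_nat (2*g+1))"
      have vV: "v \<in> Vsp g" using T unfolding Vsp_def v_def contr_def Cpair_def V3_def by auto
      define x where "x = tprod21 (omega0 g) v - tprod12 v (omega0 g)"
      define y where "y = T - x"
      have xc: "x \<in> commOmegaV g" unfolding commOmegaV_def x_def using vV by blast
      have xV: "x \<in> V3 g" unfolding x_def using comm_V3[OF vV] .
      have cy: "contr g y i = 0" for i
        unfolding y_def contr_diff unfolding x_def contr_comm[OF vV] unfolding v_def using nz by (simp add: field_simps)
      have yV: "y \<in> V3 g" using T xV unfolding y_def V3_def fun_diff_def by auto
      have "y \<in> VtensQ g"
        unfolding VtensQ_def
      proof (intro CollectI exI conjI allI impI)
        fix m :: nat assume "m < 2*g"
        show "(\<lambda>i. if i = m then 1 else 0) \<in> (Vsp g :: (nat \<Rightarrow> 'a) set)"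
          using \<open>m < 2*g\<close> unfolding Vsp_def by auto
        show "y m \<in> Qsp g" using yV cy[of m] unfolding Qsp_def V2_def V3_def contr_def by auto
      next
        show "y = (\<lambda>i j k. \<Sum>m<2*g. (if i = m then 1 else 0) * y m j k)"
        proof (intro ext)
          fix i j k
          show "y i j k = (\<Sum>m<2*g. (if i = m then 1 else 0) * y m j k)"
          proof -
            have "(\<Sum>m<2*g. (if i = m then 1 else 0) * y m j k) = (\<Sum>m<2*g. if m = i then y i j k else 0)"
              by (rule sum.cong) auto
            also have "\<dots> = y i j k" using yV unfolding V3_def by (simp add: sum.delta)
            finally show ?thesis by simp
          qed
        qed
      qed
      moreover have "T = x + y" unfolding y_def by simp
      ultimately show "T \<in> {x + y |x y. x \<in> commOmegaV g \<and> y \<in> VtensQ g}" using xc by blast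
    qed
  qed
next
  have nz: "(of_nat (2*g+1) :: 'a) \<noteq> 0" by (metis of_nat_eq_0_iff add_is_0 one_neq_zero)
  show "commOmegaV g \<inter> VtensQ g = {0 :: nat \<Rightarrow> nat \<Rightarrow> nat \<Rightarrow> 'a}"
  proof
    show "commOmegaV g \<inter> VtensQ g \<subseteq> {0 :: nat \<Rightarrow> nat \<Rightarrow> nat \<Rightarrow> 'a}"
    proof
      fix x :: "nat \<Rightarrow> nat \<Rightarrow> nat \<Rightarrow> 'a" assume x: "x \<in> commOmegaV g \<inter> VtensQ g"
      then obtain v where vV: "v \<in> Vsp g" and xd: "x = tprod21 (omega0 g) v - tprod12 v (omega0 g)"
        unfolding commOmegaV_def by blast
      have "v i = 0" for i
      proof -
        have "- of_nat (2*g+1) * v i = 0"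
          using contr_VQ[of x g i] x contr_comm[OF vV, of i] unfolding xd by simp
        then show ?thesis using nz by (simp only: mult_eq_0_iff neg_equal_0_iff_equal) blast
      qed
      then have "v = (\<lambda>_. 0)" by auto
      then show "x \<in> {0}" unfolding xd tprod21_def tprod12_def fun_diff_def by (auto simp: zero_fun_def)
    qed
  next
    have "(0 :: nat \<Rightarrow> nat \<Rightarrow> nat \<Rightarrow> 'a) \<in> commOmegaV g"
      unfolding commOmegaV_def
      by (rule CollectI, rule exI[of _ "\<lambda>_. 0"]) (auto simp: Vsp_def tprod21_def tprod12_def fun_diff_def zero_fun_def)
    moreover have "(0 :: nat \<Rightarrow> nat \<Rightarrow> nat \<Rightarrow> 'a) \<in> VtensQ g"
      unfolding VtensQ_def by (rule CollectI, rule exI[of _ 0]) (auto simp: zero_fun_def)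
    ultimately show "{0 :: nat \<Rightarrow> nat \<Rightarrow> nat \<Rightarrow> 'a} \<subseteq> commOmegaV g \<inter> VtensQ g" by auto
  qed
qed

end
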